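(* Let $q$ be a prime power and let $\mathbb{F}_q$ denote the field with $q$ elements. There exist $\epsilon > 0$ and a constant $c_q < q$ such that the following holds: for every $\delta > 0$, for all sufficiently large $n$, for every set $A \subset \mathbb{F}_q^n$ with $|A| > c_q^n$ and every tuple $\mathbf{a} = (a,b,c) \in (\mathbb{F}_q\setminus\{0\})^3$ with $a+b+c=0$, we have \[ |A_{\mathbf{a}}^{\epsilon}| \ge (1-\delta)|A|, \] where \[ A_{\mathbf{a}}^{\epsilon} = \{x \in A \,:\, \text{there exist at least } |A|^{\epsilon} \text{ pairs } (y,z) \in A^2 \text{ with } ax+by+cz=0\}. \] Equivalently: there exists $\epsilon>0$ such that for every $\delta>0$, every $(\epsilon,\delta)$-cap set $A\subset \mathbb{F}_q^n$ satisfies $|A| \le c_q^n$ for sufficiently large $n$.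
   Context: For $\epsilon,\delta>0$ and a tuple $(a,b,c)\in(\mathbb{F}_q\setminus\{0\})^3$ with $a+b+c=0$, a set $A\subset\mathbb{F}_q^n$ is called an $(\epsilon,\delta)$-cap set (for the tuple $(a,b,c)$) if there exists $A'\subset A$ with $|A'|>\delta|A|$ such that for every $x\in A'$ the number of pairs $(y,z)\in A^2$ with $ax+by+cz=0$ is less than $|A|^{\epsilon}$. *)

theory Defs
  imports Complex_Main "HOL-Library.FuncSet"
begin

text \<open>The vector space F_q^n, realised as functions on the index set {0..<n}
 (extensional: value undefined outside the index set).\<close>

definition Fqn :: "nat \<Rightarrow> (nat \<Rightarrow> 'a) set" where
  "Fqn n = PiE {..<n} (\<lambda>_. UNIV)"

definition num_solutions :: "nat \<Rightarrow> (nat \<Rightarrow> 'a::field) set \<Rightarrow> 'a \<Rightarrow> 'a \<Rightarrow> 'a \<Rightarrow> (nat \<Rightarrow> 'a) \<Rightarrow> nat" where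
  "num_solutions n A a b c x =
     card {(y, z). y \<in> A \<and> z \<in> A \<and> (\<forall>i<n. a * x i + b * y i + c * z i = 0)}"

definition A_eps :: "nat \<Rightarrow> (nat \<Rightarrow> 'a::field) set \<Rightarrow> 'a \<Rightarrow> 'a \<Rightarrow> 'a \<Rightarrow> real \<Rightarrow> (nat \<Rightarrow> 'a) set" where
  "A_eps n A a b c \<epsilon> = {x \<in> A. real (num_solutions n A a b c x) \<ge> real (card A) powr \<epsilon>}"

end

theory Submission
  imports Defs Complex_Main "HOL-Library.FuncSet" "HOL-Library.Function_Algebras"
begin



lemma indeg_sum:
  assumes "finite V"
  shows "(\<Sum>v\<in>V. card {y\<in>V. R y v}) = (\<Sum>y\<in>V. card {v\<in>V. R y v})"
proof -
  have "(\<Sum>y\<in>V. card {v\<in>V. R y v}) = card (Sigma V (\<lambda>y. {v\<in>V. R y v}))"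
    using assms by (simp add: card_SigmaI)
  also have "Sigma V (\<lambda>y. {v\<in>V. R y v}) = prod.swap ` Sigma V (\<lambda>v. {y\<in>V. R y v})"
    by auto
  also have "card \<dots> = card (Sigma V (\<lambda>v. {y\<in>V. R y v}))"
    by (rule card_image) (auto simp: inj_on_def)
  also have "\<dots> = (\<Sum>v\<in>V. card {y\<in>V. R y v})"
    using assms by (simp add: card_SigmaI)
  finally show ?thesis by simp
qed

lemma indep_set_exists:
  fixes K :: nat
  shows "finite V \<Longrightarrow> (\<forall>x\<in>V. card {y\<in>V. R x y} \<le> K) \<Longrightarrow>
    \<exists>I\<subseteq>V. (\<forall>x\<in>I. \<forall>y\<in>I. R x y \<longrightarrow> x = y) \<and> card V \<le> (2*K+1) * card I"
proof (induction "card V" arbitrary: V rule: less_induct)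
  case less
  show ?case
  proof (cases "V = {}")
    case True then show ?thesis by auto
  next
    case False
    have "\<exists>v\<in>V. card {y\<in>V. R y v} \<le> K"
    proof (rule ccontr)
      assume "\<not> ?thesis"
      then have "\<forall>v\<in>V. Suc K \<le> card {y\<in>V. R y v}" by auto
      then have "(\<Sum>v\<in>V. Suc K) \<le> (\<Sum>v\<in>V. card {y\<in>V. R y v})" by (intro sum_mono) auto
      also have "\<dots> = (\<Sum>y\<in>V. card {v\<in>V. R y v})" using less.prems(1) by (rule indeg_sum)
      also have "\<dots> \<le> (\<Sum>y\<in>V. K)" using less.prems by (intro sum_mono) auto
      finally show False using False less.prems(1) by simp
    qed
    then obtain v where v: "v \<in> V" "card {y\<in>V. R y v} \<le> K" by blast
    define N where "N = insert v ({y\<in>V. R v y} \<union> {y\<in>V. R y v})"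
    have fN: "finite N" using less.prems(1) by (auto simp: N_def)
    have cN: "card N \<le> 2*K+1"
    proof -
      have "card N \<le> Suc (card ({y\<in>V. R v y} \<union> {y\<in>V. R y v}))"
        unfolding N_def by (rule card_insert_le_m1) (auto simp: less.prems(1))
      also have "card ({y\<in>V. R v y} \<union> {y\<in>V. R y v}) \<le> card {y\<in>V. R v y} + card {y\<in>V. R y v}"
        by (rule card_Un_le)
      finally show ?thesis using v less.prems(2) by fastforce
    qed
    define V' where "V' = V - N"
    have "N \<subseteq> V" using v by (auto simp: N_def)
    have cV: "card V = card V' + card N"
      unfolding V'_def using \<open>N \<subseteq> V\<close> less.prems(1) card_Diff_subset[of N V] card_mono[of V N]
      by (simp add: fN)
    have "N \<noteq> {}" by (simp add: N_def)
    then have "card N > 0" using fN by (simp add: card_gt_0_iff)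
    then have lt: "card V' < card V" using cV by linarith
    have fV': "finite V'" using less.prems(1) by (auto simp: V'_def)
    have dV': "\<forall>x\<in>V'. card {y\<in>V'. R x y} \<le> K"
    proof
      fix x assume "x \<in> V'"
      then have "card {y\<in>V'. R x y} \<le> card {y\<in>V. R x y}"
        by (intro card_mono) (auto simp: V'_def less.prems(1))
      then show "card {y\<in>V'. R x y} \<le> K" using less.prems(2) \<open>x \<in> V'\<close> by (auto simp: V'_def)
    qed
    obtain I' where I': "I' \<subseteq> V'" "\<forall>x\<in>I'. \<forall>y\<in>I'. R x y \<longrightarrow> x = y"
      "card V' \<le> (2*K+1) * card I'"
      using less.hyps[OF lt fV' dV'] by blast
    have vI': "v \<notin> I'" using I'(1) by (auto simp: V'_def N_def)
    have fI': "finite I'" using I'(1) fV' finite_subset by blast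
    show ?thesis
    proof (intro exI[of _ "insert v I'"] conjI)
      show "insert v I' \<subseteq> V" using I'(1) v by (auto simp: V'_def)
      show "\<forall>x\<in>insert v I'. \<forall>y\<in>insert v I'. R x y \<longrightarrow> x = y"
        using I' by (auto simp: V'_def N_def)
      show "card V \<le> (2 * K + 1) * card (insert v I')"
        using cV cN I'(3) vI' fI' by simp
    qed
  qed
qed



definition EE :: "nat \<Rightarrow> nat \<Rightarrow> (nat \<Rightarrow> nat) set" where
  "EE q n = PiE {..<n} (\<lambda>_. {..<q})"
definition dg :: "nat \<Rightarrow> (nat \<Rightarrow> nat) \<Rightarrow> nat" where
  "dg n e = (\<Sum>i<n. e i)"
definition mm :: "nat \<Rightarrow> nat \<Rightarrow> nat \<Rightarrow> nat" where
  "mm q n s = card {e\<in>EE q n. dg n e \<le> s}"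

lemma finite_EE[simp]: "finite (EE q n)"
  by (simp add: EE_def finite_PiE)

lemma card_EE: "card (EE q n) = q ^ n"
  by (simp add: EE_def card_PiE)

lemma dg_le: "e \<in> EE q n \<Longrightarrow> dg n e \<le> (q - 1) * n"
proof -
  assume "e \<in> EE q n"
  then have "\<forall>i<n. e i \<le> q - 1" by (auto simp: EE_def PiE_def Pi_def)
  then have "(\<Sum>i<n. e i) \<le> (\<Sum>i<n. q - 1)" by (intro sum_mono) auto
  then show ?thesis by (simp add: dg_def mult.commute)
qed

definition flipE :: "nat \<Rightarrow> nat \<Rightarrow> (nat \<Rightarrow> nat) \<Rightarrow> (nat \<Rightarrow> nat)" where
  "flipE q n e = restrict (\<lambda>i. q - 1 - e i) {..<n}"

lemma flipE_EE: "q > 0 \<Longrightarrow> e \<in> EE q n \<Longrightarrow> flipE q n e \<in> EE q n"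
  by (auto simp: EE_def flipE_def PiE_def Pi_def)

lemma flipE_flipE: "e \<in> EE q n \<Longrightarrow> flipE q n (flipE q n e) = e"
  by (auto simp: EE_def flipE_def PiE_def Pi_def extensional_def fun_eq_iff)

lemma dg_flipE: "e \<in> EE q n \<Longrightarrow> dg n (flipE q n e) + dg n e = (q - 1) * n"
proof -
  assume e: "e \<in> EE q n"
  then have "\<forall>i<n. e i \<le> q - 1" by (auto simp: EE_def PiE_def Pi_def)
  then have "(\<Sum>i<n. (q - 1 - e i)) + (\<Sum>i<n. e i) = (\<Sum>i<n. q - 1)"
    by (subst sum.distrib[symmetric]) (intro sum.cong, auto)
  then show ?thesis by (simp add: dg_def flipE_def mult.commute)
qed

lemma card_high:
  assumes "q > 0"
  shows "card {e\<in>EE q n. d < dg n e} = card {e\<in>EE q n. dg n e + d < (q - 1) * n}"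
proof -
  have "bij_betw (flipE q n) {e\<in>EE q n. d < dg n e} {e\<in>EE q n. dg n e + d < (q - 1) * n}"
  proof (rule bij_betw_byWitness[where f' = "flipE q n"])
    show "\<forall>a\<in>{e \<in> EE q n. d < dg n e}. flipE q n (flipE q n a) = a" by (auto simp: flipE_flipE)
    show "\<forall>a\<in>{e \<in> EE q n. dg n e + d < (q - 1) * n}. flipE q n (flipE q n a) = a" by (auto simp: flipE_flipE)
    show "flipE q n ` {e \<in> EE q n. d < dg n e} \<subseteq> {e \<in> EE q n. dg n e + d < (q - 1) * n}"
      using dg_flipE flipE_EE assms by fastforce
    show "flipE q n ` {e \<in> EE q n. dg n e + d < (q - 1) * n} \<subseteq> {e \<in> EE q n. d < dg n e}"
      using dg_flipE flipE_EE assms by fastforce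
  qed
  then show ?thesis by (rule bij_betw_same_card)
qed

lemma mm_total: "card {e\<in>EE q n. d < dg n e} + mm q n d = q ^ n"
proof -
  have "card {e\<in>EE q n. d < dg n e} + mm q n d = card ({e\<in>EE q n. d < dg n e} \<union> {e\<in>EE q n. dg n e \<le> d})"
    unfolding mm_def by (subst card_Un_disjoint) auto
  also have "{e\<in>EE q n. d < dg n e} \<union> {e\<in>EE q n. dg n e \<le> d} = EE q n" by auto
  finally show ?thesis by (simp add: card_EE)
qed

lemma high_bound:
  assumes "q > 0"
  shows "q ^ n \<le> mm q n (2 * ((q - 1) * n div 3)) + mm q n ((q - 1) * n div 3 + 1)"
proof -
  let ?t = "(q - 1) * n div 3"
  have "card {e\<in>EE q n. 2 * ?t < dg n e} = card {e\<in>EE q n. dg n e + 2 * ?t < (q - 1) * n}"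
    by (rule card_high[OF assms])
  also have "\<dots> \<le> mm q n (?t + 1)"
    unfolding mm_def by (intro card_mono) auto
  finally show ?thesis using mm_total[of q n "2 * ?t"] by linarith
qed

lemma mm_gen_bound:
  fixes y :: real
  assumes "0 < y" "y \<le> 1"
  shows "real (mm q n s) \<le> (1 / y) ^ s * (\<Sum>k<q. y ^ k) ^ n"
proof -
  have "real (mm q n s) = (\<Sum>e\<in>{e\<in>EE q n. dg n e \<le> s}. 1)" by (simp add: mm_def)
  also have "\<dots> \<le> (\<Sum>e\<in>{e\<in>EE q n. dg n e \<le> s}. (1/y)^s * y ^ dg n e)"
  proof (intro sum_mono)
    fix e assume "e \<in> {e\<in>EE q n. dg n e \<le> s}"
    then have "y ^ s \<le> y ^ dg n e" using assms by (intro power_decreasing) auto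
    then show "1 \<le> (1/y)^s * y ^ dg n e" using assms by (simp add: field_simps power_divide)
  qed
  also have "\<dots> \<le> (\<Sum>e\<in>EE q n. (1/y)^s * y ^ dg n e)"
    using assms by (intro sum_mono2) auto
  also have "\<dots> = (1/y)^s * (\<Sum>e\<in>EE q n. y ^ dg n e)"
    by (simp add: sum_distrib_left)
  also have "(\<Sum>e\<in>EE q n. y ^ dg n e) = (\<Sum>e\<in>EE q n. \<Prod>i<n. y ^ e i)"
    by (simp add: dg_def power_sum)
  also have "\<dots> = (\<Prod>i<n. \<Sum>k<q. y ^ k)"
    unfolding EE_def by (rule prod_sum_PiE[symmetric]) auto
  finally show ?thesis by simp
qed




lemma sum_k_lt: "(\<Sum>k<q. real k) = real q * (real q - 1) / 2"
  by (induction q) (auto simp: field_simps)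

lemma exists_y:
  assumes "q \<ge> 2"
  shows "\<exists>y::real. 0 < y \<and> y < 1 \<and> y powr (-(real q - 1)/3) * (\<Sum>k<q. y^k) < real q"
proof -
  define \<alpha> where "\<alpha> = (real q - 1)/3"
  define f where "f = (\<lambda>y::real. y powr (-\<alpha>) * (\<Sum>k<q. y^k))"
  have D: "(f has_real_derivative ((-\<alpha>) * 1 powr (-\<alpha> - 1) * (\<Sum>k<q. (1::real)^k) + (\<Sum>k<q. real k * 1 ^ (k - Suc 0)) * 1 powr (-\<alpha>))) (at 1)"
    unfolding f_def
    by (intro DERIV_mult has_real_derivative_powr DERIV_sum DERIV_pow) auto
  have "((-\<alpha>) * 1 powr (-\<alpha> - 1) * (\<Sum>k<q. (1::real)^k) + (\<Sum>k<q. real k * 1 ^ (k - Suc 0)) * 1 powr (-\<alpha>)) =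
     - \<alpha> * real q + real q * (real q - 1) / 2"
    by (simp add: sum_k_lt)
  also have "\<dots> = real q * (real q - 1) / 6" by (simp add: \<alpha>_def field_simps)
  finally have eq: "((-\<alpha>) * 1 powr (-\<alpha> - 1) * (\<Sum>k<q. (1::real)^k) + (\<Sum>k<q. real k * 1 ^ (k - Suc 0)) * 1 powr (-\<alpha>)) = real q * (real q - 1) / 6" .
  have D': "(f has_real_derivative real q * (real q - 1) / 6) (at 1)" using D by (simp only: eq)
  have "real q * (real q - 1) / 6 > 0" using assms by auto
  from DERIV_pos_inc_left[OF D' this] obtain d where d: "d > 0" "\<forall>h>0. h < d \<longrightarrow> f (1 - h) < f 1"
    by blast
  define h where "h = min (d/2) (1/2)"
  have h: "h > 0" "h < d" "h < 1" using d by (auto simp: h_def)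
  have "f (1 - h) < f 1" using d h by auto
  moreover have "f 1 = real q" by (simp add: f_def)
  ultimately show ?thesis using h by (intro exI[of _ "1 - h"]) (auto simp: f_def \<alpha>_def minus_divide_left)
qed

lemma mm_exp_bound:
  assumes "q \<ge> 2"
  shows "\<exists>C \<Gamma>. C > 0 \<and> 0 < \<Gamma> \<and> \<Gamma> < real q \<and> (\<forall>n. real (mm q n ((q - 1) * n div 3 + 1)) \<le> C * \<Gamma> ^ n)"
proof -
  obtain y :: real where y: "0 < y" "y < 1" "y powr (-(real q - 1)/3) * (\<Sum>k<q. y^k) < real q"
    using exists_y[OF assms] by blast
  define \<Gamma> where "\<Gamma> = y powr (-(real q - 1)/3) * (\<Sum>k<q. y^k)"
  have S: "(\<Sum>k<q. y^k) > 0" using assms y by (intro sum_pos) (auto simp: lessThan_empty_iff)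
  have G: "\<Gamma> > 0" unfolding \<Gamma>_def using S y by auto
  have "real (mm q n ((q - 1) * n div 3 + 1)) \<le> (1/y) * \<Gamma> ^ n" for n
  proof -
    let ?t = "(q - 1) * n div 3"
    have m1: "real (mm q n (?t + 1)) \<le> (1 / y) ^ (?t + 1) * (\<Sum>k<q. y ^ k) ^ n"
      using y by (intro mm_gen_bound) auto
    have m2: "(1 / y) ^ (?t + 1) = (1/y) * (1/y) powr (real ?t)"
      using y by (simp add: powr_realpow)
    have m3: "(1/y) powr (real ?t) \<le> (1/y) powr ((real q - 1) * real n / 3)"
    proof (rule powr_mono)
      have "real (3 * ?t) \<le> real ((q - 1) * n)" by linarith
      then show "real ?t \<le> (real q - 1) * real n / 3" using assms by (simp add: of_nat_diff)
      show "1 \<le> 1/y" using y by simp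
    qed
    have m4: "(1/y) powr ((real q - 1) * real n / 3) = (y powr (-(real q - 1)/3)) ^ n"
    proof -
      have "(y powr (-(real q - 1)/3)) ^ n = (y powr (-(real q - 1)/3)) powr (real n)"
        using y by (simp add: powr_realpow)
      also have "\<dots> = y powr (-((real q - 1) * real n / 3))" unfolding powr_powr
        by (rule arg_cong[where f="\<lambda>x. y powr x"]) (simp add: field_simps)
      also have "\<dots> = (1/y) powr ((real q - 1) * real n / 3)"
        using y by (simp add: powr_minus powr_divide inverse_eq_divide)
      finally show ?thesis by simp
    qed
    have "(1 / y) ^ (?t + 1) * (\<Sum>k<q. y ^ k) ^ n \<le> (1/y) * (y powr (-(real q - 1)/3)) ^ n * (\<Sum>k<q. y ^ k) ^ n"
      unfolding m2 m4[symmetric] using m3 y S by (intro mult_right_mono mult_left_mono) auto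
    with m1 have "real (mm q n (?t + 1)) \<le> 1 / y * (y powr (- (real q - 1) / 3)) ^ n * (\<Sum>k<q. y ^ k) ^ n"
      by linarith
    then show ?thesis by (simp add: \<Gamma>_def power_mult_distrib mult.assoc)
  qed
  then show ?thesis using y G by (intro exI[of _ "1/y"] exI[of _ \<Gamma>]) (auto simp: \<Gamma>_def)
qed




interpretation fvs: vector_space "(\<lambda>(c::'a::field) (f::'b \<Rightarrow> 'a). (\<lambda>x. c * f x))"
  by unfold_locales (auto simp: fun_eq_iff algebra_simps)

lemma sum_fun_apply: "(sum f A) x = sum (\<lambda>a. f a x) A"
  by (induction A rule: infinite_finite_induct) auto

lemma fermat_field:
  fixes x :: "'a::{finite,field}"
  assumes "x \<noteq> 0"
  shows "x ^ (card (UNIV::'a set) - 1) = 1"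
proof -
  let ?U = "UNIV - {0::'a}"
  have bij: "bij_betw (\<lambda>y. x * y) ?U ?U"
    using assms by (auto simp: bij_betw_def inj_on_def intro!: image_eqI[where x="y / x" for y])
  have "(\<Prod>y\<in>?U. x * y) = (\<Prod>y\<in>?U. y)"
    using prod.reindex_bij_betw[OF bij, of "\<lambda>y. y"] by simp
  moreover have "(\<Prod>y\<in>?U. x * y) = x ^ card ?U * (\<Prod>y\<in>?U. y)"
    by (simp add: prod.distrib)
  moreover have "(\<Prod>y\<in>?U. y) \<noteq> 0" by (simp add: prod_zero_iff)
  moreover have "card ?U = card (UNIV::'a set) - 1" by (simp add: card_Diff_singleton)
  ultimately show ?thesis by simp
qed

lemma card_ge2: "card (UNIV::'a::{finite,field} set) \<ge> 2"
proof -
  have "card {0::'a, 1} \<le> card (UNIV::'a set)" by (rule card_mono) auto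
  then show ?thesis by simp
qed

definition monoF :: "nat \<Rightarrow> (nat \<Rightarrow> nat) \<Rightarrow> (nat \<Rightarrow> 'a::field) \<Rightarrow> 'a" where
  "monoF n e x = (\<Prod>i<n. x i ^ e i)"

definition mon :: "nat \<Rightarrow> (nat \<Rightarrow> nat) \<Rightarrow> (nat \<Rightarrow> 'a::field) \<Rightarrow> 'a" where
  "mon n e = (\<lambda>x. if x \<in> Fqn n then monoF n e x else 0)"

definition delta :: "'b \<Rightarrow> 'b \<Rightarrow> 'a::field" where
  "delta p = (\<lambda>x. if x = p then 1 else 0)"

lemma finite_Fqn[simp]: "finite (Fqn n :: (nat \<Rightarrow> 'a::finite) set)"
  by (simp add: Fqn_def finite_PiE)

lemma card_Fqn: "card (Fqn n :: (nat \<Rightarrow> 'a::finite) set) = card (UNIV::'a set) ^ n"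
  by (simp add: Fqn_def card_PiE)

lemma delta_inj: "inj (delta :: 'b \<Rightarrow> 'b \<Rightarrow> 'a::field)"
  by (auto simp: inj_def delta_def fun_eq_iff split: if_splits)

lemma delta_indep: "fvs.independent (delta ` P :: ('b \<Rightarrow> 'a::field) set)"
  unfolding fvs.independent_explicit_module
proof (intro allI impI)
  fix t u v assume t: "finite t" "t \<subseteq> delta ` P" "(\<Sum>v\<in>t. (\<lambda>x. u v * v x)) = (0::'b \<Rightarrow> 'a)" "v \<in> t"
  then obtain p where p: "v = delta p" by auto
  have "0 = (\<Sum>v\<in>t. (\<lambda>x. u v * v x)) p" using t(3) by simp
  also have "\<dots> = (\<Sum>w\<in>t. u w * w p)" by (simp add: sum_fun_apply)
  also have "\<dots> = (\<Sum>w\<in>{v}. u w * w p)"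
  proof (rule sum.mono_neutral_right)
    show "finite t" by fact
    show "{v} \<subseteq> t" using t by auto
    show "\<forall>i\<in>t - {v}. u i * i p = 0"
    proof
      fix w assume "w \<in> t - {v}"
      then obtain p' where "w = delta p'" "p' \<noteq> p" using t p by auto
      then show "u w * w p = 0" by (simp add: delta_def)
    qed
  qed
  also have "\<dots> = u v" by (simp add: p delta_def)
  finally show "u v = 0" by simp
qed

lemma poly_prod_span:
  fixes g :: "nat \<Rightarrow> nat \<Rightarrow> 'a::{finite,field}"
  shows "(\<lambda>x. if x \<in> Fqn n then (\<Prod>i<n. \<Sum>k<q. g i k * x i ^ k) else 0)
     = (\<Sum>e\<in>EE q n. (\<lambda>x. (\<Prod>i<n. g i (e i)) * mon n e x))"
proof
  fix x :: "nat \<Rightarrow> 'a"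
  show "(if x \<in> Fqn n then (\<Prod>i<n. \<Sum>k<q. g i k * x i ^ k) else 0) =
        (\<Sum>e\<in>EE q n. (\<lambda>x. (\<Prod>i<n. g i (e i)) * mon n e x)) x"
  proof (cases "x \<in> Fqn n")
    case True
    have "(\<Prod>i<n. \<Sum>k<q. g i k * x i ^ k) = (\<Sum>e\<in>EE q n. \<Prod>i<n. g i (e i) * x i ^ e i)"
      unfolding EE_def by (rule prod_sum_PiE) auto
    also have "\<dots> = (\<Sum>e\<in>EE q n. (\<Prod>i<n. g i (e i)) * mon n e x)"
      using True by (simp add: mon_def monoF_def prod.distrib)
    finally show ?thesis using True by (simp add: sum_fun_apply)
  next
    case False
    then show ?thesis by (simp add: sum_fun_apply mon_def)
  qed
qed

lemma poly_prod_in_span: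
  fixes g :: "nat \<Rightarrow> nat \<Rightarrow> 'a::{finite,field}"
  shows "(\<lambda>x. if x \<in> Fqn n then (\<Prod>i<n. \<Sum>k<q. g i k * x i ^ k) else 0) \<in> fvs.span (mon n ` EE q n)"
  unfolding poly_prod_span
  by (intro fvs.span_sum fvs.span_scale fvs.span_base) auto




lemma univ_coeff:
  fixes s t :: "'a::{finite,field}"
  shows "1 - (t - s) ^ (card (UNIV::'a set) - 1) =
    (\<Sum>k<card (UNIV::'a set). ((if k = 0 then 1 else 0) - of_nat ((card (UNIV::'a set) - 1) choose k) * (- s) ^ (card (UNIV::'a set) - 1 - k)) * t ^ k)"
proof -
  let ?q = "card (UNIV::'a set)"
  have q: "{..<?q} = {..?q - 1}" using card_ge2[where 'a='a] by auto
  have "(t - s) ^ (?q - 1) = (t + (- s)) ^ (?q - 1)" by simp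
  also have "\<dots> = (\<Sum>k\<le>?q - 1. of_nat ((?q - 1) choose k) * t ^ k * (- s) ^ (?q - 1 - k))"
    by (rule binomial_ring)
  finally have b: "(t - s) ^ (?q - 1) = (\<Sum>k<?q. of_nat ((?q - 1) choose k) * (- s) ^ (?q - 1 - k) * t ^ k)"
    unfolding q by (simp add: mult_ac)
  have "(\<Sum>k<?q. ((if k = 0 then 1 else 0) - of_nat ((?q - 1) choose k) * (- s) ^ (?q - 1 - k)) * t ^ k)
     = (\<Sum>k<?q. (if k = 0 then 1 else 0) * t ^ k) - (\<Sum>k<?q. of_nat ((?q - 1) choose k) * (- s) ^ (?q - 1 - k) * t ^ k)"
    by (simp add: left_diff_distrib sum_subtractf)
  also have "(\<Sum>k<?q. (if k = 0 then 1 else 0) * t ^ k) = (\<Sum>k<?q. if k = 0 then t ^ k else 0)"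
    by (intro sum.cong) auto
  also have "\<dots> = 1"
    using card_ge2[where 'a='a] by (simp add: sum.delta)
  finally show ?thesis using b by simp
qed

lemma delta_in_span:
  fixes p :: "nat \<Rightarrow> 'a::{finite,field}"
  assumes p: "p \<in> Fqn n"
  shows "delta p \<in> fvs.span (mon n ` EE (card (UNIV::'a set)) n)"
proof -
  let ?q = "card (UNIV::'a set)"
  define g where "g = (\<lambda>i k. ((if k = 0 then 1 else 0) - of_nat ((?q - 1) choose k) * (- p i) ^ (?q - 1 - k)) :: 'a)"
  have "delta p = (\<lambda>x. if x \<in> Fqn n then (\<Prod>i<n. \<Sum>k<?q. g i k * x i ^ k) else 0)"
  proof
    fix x :: "nat \<Rightarrow> 'a"
    show "delta p x = (if x \<in> Fqn n then (\<Prod>i<n. \<Sum>k<?q. g i k * x i ^ k) else 0)"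
    proof (cases "x \<in> Fqn n")
      case False
      then show ?thesis using p by (auto simp: delta_def)
    next
      case True
      have e: "(\<Prod>i<n. \<Sum>k<?q. g i k * x i ^ k) = (\<Prod>i<n. 1 - (x i - p i) ^ (?q - 1))"
        by (simp only: g_def univ_coeff)
      show ?thesis
      proof (cases "x = p")
        case True
        have "?q - 1 > 0" using card_ge2[where 'a='a] by simp
        then have "(0::'a) ^ (?q - 1) = 0" by (rule zero_power)
        then have "(\<Prod>i<n. 1 - (x i - p i) ^ (?q - 1)) = (\<Prod>i<n. (1::'a))"
          by (intro prod.cong refl) (simp only: True diff_self diff_zero)
        then show ?thesis using e \<open>x \<in> Fqn n\<close> True by (simp add: delta_def)
      next
        case False
        then obtain i where i: "x i \<noteq> p i" by auto
        have "i < n"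
        proof (rule ccontr)
          assume "\<not> i < n"
          then show False using i \<open>x \<in> Fqn n\<close> p by (auto simp: Fqn_def PiE_def extensional_def)
        qed
        have "x i - p i \<noteq> 0" using i by simp
        then have "(x i - p i) ^ (?q - 1) = 1" by (rule fermat_field)
        then have "1 - (x i - p i) ^ (?q - 1) = 0" by simp
        then have "(\<Prod>i<n. 1 - (x i - p i) ^ (?q - 1)) = 0"
          using \<open>i < n\<close> by (intro prod_zero) auto
        then show ?thesis using e False True by (simp add: delta_def)
      qed
    qed
  qed
  then show ?thesis using poly_prod_in_span[where g=g and n=n and q="card (UNIV::'a set)"] by simp
qed

lemma mono_in_span_delta:
  "mon n e \<in> fvs.span (delta ` (Fqn n :: (nat \<Rightarrow> 'a::{finite,field}) set))"
proof -
  have "(mon n e :: (nat \<Rightarrow> 'a) \<Rightarrow> 'a) = (\<Sum>p\<in>Fqn n. (\<lambda>x. mon n e p * delta p x))"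
  proof
    fix x :: "nat \<Rightarrow> 'a"
    show "mon n e x = (\<Sum>p\<in>Fqn n. (\<lambda>x. mon n e p * delta p x)) x"
    proof (cases "x \<in> Fqn n")
      case True
      have "(\<Sum>p\<in>Fqn n. mon n e p * delta p x) = (\<Sum>p\<in>{x}. mon n e p * delta p x)"
        by (rule sum.mono_neutral_right) (auto simp: True delta_def)
      then show ?thesis by (simp add: sum_fun_apply delta_def)
    next
      case False
      have "\<forall>p\<in>Fqn n. mon n e p * delta p x = 0" using False by (auto simp: delta_def)
      then show ?thesis using False by (simp add: sum_fun_apply mon_def sum.neutral)
    qed
  qed
  also have "\<dots> \<in> fvs.span (delta ` Fqn n)"
    by (intro fvs.span_sum fvs.span_scale fvs.span_base) auto
  finally show ?thesis .
qed

lemma card_le_dim_spanning':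
  fixes B :: "('b \<Rightarrow> 'a::field) set"
  assumes BV: "B \<subseteq> V"
    and VB: "V \<subseteq> fvs.span B"
    and fB: "finite B"
    and dVB: "fvs.dim V \<ge> card B"
  shows "fvs.independent B"
proof -
  {
    fix a
    assume a: "a \<in> B" "a \<in> fvs.span (B - {a})"
    from a fB have c0: "card B \<noteq> 0"
      by auto
    from a fB have cb: "card (B - {a}) = card B - 1"
      by auto
    {
      fix x
      assume x: "x \<in> V"
      from a have eq: "insert a (B - {a}) = B"
        by blast
      from x VB have x': "x \<in> fvs.span B"
        by blast
      from fvs.span_trans[OF a(2), unfolded eq, OF x']
      have "x \<in> fvs.span (B - {a})" .
    }
    then have th1: "V \<subseteq> fvs.span (B - {a})"
      by blast
    have th2: "finite (B - {a})"
      using fB by auto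
    from fvs.dim_le_card[OF th1 th2]
    have c: "fvs.dim V \<le> card (B - {a})" .
    from c c0 dVB cb have False by simp
  }
  then show ?thesis unfolding fvs.dependent_def by blast
qed

lemma mono_indep_inj:
  defines "q \<equiv> card (UNIV::'a::{finite,field} set)"
  shows "fvs.independent (mon n ` EE q n :: ((nat \<Rightarrow> 'a) \<Rightarrow> 'a) set) \<and> inj_on (mon n :: _ \<Rightarrow> (nat \<Rightarrow> 'a) \<Rightarrow> 'a) (EE q n)"
proof -
  let ?M = "mon n ` EE q n :: ((nat \<Rightarrow> 'a) \<Rightarrow> 'a) set"
  let ?D = "delta ` (Fqn n :: (nat \<Rightarrow> 'a) set) :: ((nat \<Rightarrow> 'a) \<Rightarrow> 'a) set"
  have s1: "?M \<subseteq> fvs.span ?D" using mono_in_span_delta by auto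
  have s2: "?D \<subseteq> fvs.span ?M" using delta_in_span unfolding q_def by auto
  have sp: "fvs.span ?D \<subseteq> fvs.span ?M"
    using s2 by (metis fvs.span_mono fvs.span_span)
  have "inj_on (delta :: (nat\<Rightarrow>'a) \<Rightarrow> (nat\<Rightarrow>'a) \<Rightarrow> 'a) (Fqn n)"
    using delta_inj by (rule inj_on_subset) auto
  then have "card ?D = card (Fqn n :: (nat \<Rightarrow> 'a) set)"
    by (rule card_image)
  then have cD: "card ?D = q ^ n" by (simp add: card_Fqn q_def)
  have "fvs.independent ?D" by (rule delta_indep)
  then have "fvs.dim (fvs.span ?D) = card ?D" by (rule fvs.dim_span_eq_card_independent)
  with cD have dim: "fvs.dim (fvs.span ?D) = q ^ n" by simp
  have cM: "card ?M \<le> q ^ n" using card_image_le[of "EE q n" "mon n"] card_EE[of q n] by simp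
  have ind: "fvs.independent ?M"
    by (rule card_le_dim_spanning'[OF s1 sp]) (use cM dim in auto)
  have "fvs.dim (fvs.span ?D) \<le> card ?M"
    by (rule fvs.span_card_ge_dim[OF s1 sp]) auto
  then have "card ?M = card (EE q n)" using cM dim card_EE[of q n] by simp
  then have "inj_on (mon n :: _ \<Rightarrow> (nat \<Rightarrow> 'a) \<Rightarrow> 'a) (EE q n)" by (intro eq_card_imp_inj_on) auto
  with ind show ?thesis by simp
qed




definition lin :: "nat \<Rightarrow> 'a::field \<Rightarrow> 'a \<Rightarrow> (nat \<Rightarrow> 'a) \<Rightarrow> (nat \<Rightarrow> 'a) \<Rightarrow> (nat \<Rightarrow> 'a)" where
  "lin n a b x y = (\<lambda>i. if i < n then a * x i + b * y i else undefined)"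

lemma lin_Fqn[simp]: "lin n a b x y \<in> Fqn n"
  by (auto simp: lin_def Fqn_def PiE_def extensional_def)

definition Pairs :: "nat \<Rightarrow> nat \<Rightarrow> nat \<Rightarrow> ((nat \<Rightarrow> nat) \<times> (nat \<Rightarrow> nat)) set" where
  "Pairs q n d = {(k, j). k \<in> EE q n \<and> j \<in> EE q n \<and> dg n k + dg n j \<le> d}"

lemma Pairs_sub: "Pairs q n d \<subseteq> EE q n \<times> EE q n"
  by (auto simp: Pairs_def)

lemma finite_Pairs[simp]: "finite (Pairs q n d)"
  by (rule finite_subset[OF Pairs_sub]) auto

definition poly2 :: "nat \<Rightarrow> nat \<Rightarrow> nat \<Rightarrow> ((nat \<Rightarrow> 'a::field) \<Rightarrow> (nat \<Rightarrow> 'a) \<Rightarrow> 'a) \<Rightarrow> bool" where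
  "poly2 q n d f \<longleftrightarrow> (\<exists>C. \<forall>x\<in>Fqn n. \<forall>y\<in>Fqn n.
      f x y = (\<Sum>p\<in>Pairs q n d. C (fst p) (snd p) * monoF n (fst p) x * monoF n (snd p) y))"

lemma poly2_zero: "poly2 q n d (\<lambda>x y. 0)"
  unfolding poly2_def by (intro exI[of _ "\<lambda>_ _. 0"]) auto

lemma poly2_comb:
  assumes "poly2 q n d f" "poly2 q n d g"
  shows "poly2 q n d (\<lambda>x y. c * f x y + g x y)"
proof -
  obtain C1 where C1: "\<forall>x\<in>Fqn n. \<forall>y\<in>Fqn n.
      f x y = (\<Sum>p\<in>Pairs q n d. C1 (fst p) (snd p) * monoF n (fst p) x * monoF n (snd p) y)"
    using assms(1) unfolding poly2_def by blast
  obtain C2 where C2: "\<forall>x\<in>Fqn n. \<forall>y\<in>Fqn n.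
      g x y = (\<Sum>p\<in>Pairs q n d. C2 (fst p) (snd p) * monoF n (fst p) x * monoF n (snd p) y)"
    using assms(2) unfolding poly2_def by blast
  show ?thesis unfolding poly2_def
  proof (intro exI[of _ "\<lambda>k j. c * C1 k j + C2 k j"] ballI)
    fix x y :: "nat \<Rightarrow> 'a" assume xy: "x \<in> Fqn n" "y \<in> Fqn n"
    have "(\<Sum>p\<in>Pairs q n d. (c * C1 (fst p) (snd p) + C2 (fst p) (snd p)) * monoF n (fst p) x * monoF n (snd p) y)
      = (\<Sum>p\<in>Pairs q n d. c * (C1 (fst p) (snd p) * monoF n (fst p) x * monoF n (snd p) y) + C2 (fst p) (snd p) * monoF n (fst p) x * monoF n (snd p) y)"
      by (intro sum.cong refl) (simp add: distrib_right mult.assoc)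
    also have "\<dots> = c * f x y + g x y"
      using C1 C2 xy by (simp add: sum.distrib sum_distrib_left)
    finally show "c * f x y + g x y = (\<Sum>p\<in>Pairs q n d. (c * C1 (fst p) (snd p) + C2 (fst p) (snd p)) * monoF n (fst p) x * monoF n (snd p) y)"
      by simp
  qed
qed

definition subE :: "nat \<Rightarrow> (nat \<Rightarrow> nat) \<Rightarrow> (nat \<Rightarrow> nat) \<Rightarrow> (nat \<Rightarrow> nat)" where
  "subE n e k = restrict (\<lambda>i. e i - k i) {..<n}"

lemma poly2_monoF:
  fixes a b :: "'a::field"
  assumes e: "e \<in> EE q n" "dg n e \<le> d"
  shows "poly2 q n d (\<lambda>x y. monoF n e (lin n a b x y))"
proof -
  define K where "K = PiE {..<n} (\<lambda>i. {..e i})"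
  define \<beta> where "\<beta> = (\<lambda>i k. of_nat (e i choose k) * a ^ k * b ^ (e i - k) :: 'a)"
  define C where "C = (\<lambda>k j. if k \<in> K \<and> j = subE n e k then (\<Prod>i<n. \<beta> i (k i)) else 0)"
  have fK: "finite K" by (simp add: K_def finite_PiE)
  have KE: "\<kappa> \<in> EE q n" if "\<kappa> \<in> K" for \<kappa>
  proof -
    have 1: "\<forall>i<n. \<kappa> i \<le> e i" "\<kappa> \<in> extensional {..<n}" using that by (auto simp: K_def PiE_def Pi_def)
    have 2: "\<forall>i<n. e i < q" using e(1) by (auto simp: EE_def PiE_def Pi_def)
    have "\<forall>i<n. \<kappa> i < q" using 1 2 by (metis le_less_trans)
    then show ?thesis using 1 by (auto simp: EE_def PiE_def Pi_def)
  qed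
  have sE: "subE n e \<kappa> \<in> EE q n" if "\<kappa> \<in> K" for \<kappa>
  proof -
    have 2: "\<forall>i<n. e i < q" using e(1) by (auto simp: EE_def PiE_def Pi_def)
    have "\<forall>i<n. e i - \<kappa> i < q" using 2 by (metis diff_le_self le_less_trans)
    then show ?thesis unfolding subE_def EE_def by (simp add: restrict_PiE_iff)
  qed
  have dgs: "dg n \<kappa> + dg n (subE n e \<kappa>) = dg n e" if "\<kappa> \<in> K" for \<kappa>
  proof -
    have "(\<Sum>i<n. \<kappa> i) + (\<Sum>i<n. e i - \<kappa> i) = (\<Sum>i<n. e i)"
    proof -
      have le: "\<forall>i<n. \<kappa> i \<le> e i" using that by (auto simp: K_def PiE_def Pi_def)
      have "(\<Sum>i<n. \<kappa> i) + (\<Sum>i<n. e i - \<kappa> i) = (\<Sum>i<n. \<kappa> i + (e i - \<kappa> i))"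
        by (simp add: sum.distrib)
      also have "\<dots> = (\<Sum>i<n. e i)" using le by (intro sum.cong) auto
      finally show ?thesis .
    qed
    then show ?thesis by (simp add: dg_def subE_def)
  qed
  show ?thesis unfolding poly2_def
  proof (intro exI[of _ C] ballI)
    fix x y :: "nat \<Rightarrow> 'a"
    have "monoF n e (lin n a b x y) = (\<Prod>i<n. (a * x i + b * y i) ^ e i)"
      by (simp add: monoF_def lin_def)
    also have "\<dots> = (\<Prod>i<n. \<Sum>k\<le>e i. \<beta> i k * x i ^ k * y i ^ (e i - k))"
      by (intro prod.cong refl) (simp add: binomial_ring \<beta>_def power_mult_distrib mult_ac)
    also have "\<dots> = (\<Sum>\<kappa>\<in>K. \<Prod>i<n. \<beta> i (\<kappa> i) * x i ^ \<kappa> i * y i ^ (e i - \<kappa> i))"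
      unfolding K_def by (rule prod_sum_PiE) auto
    also have "\<dots> = (\<Sum>\<kappa>\<in>K. (\<Prod>i<n. \<beta> i (\<kappa> i)) * monoF n \<kappa> x * monoF n (subE n e \<kappa>) y)"
      by (intro sum.cong refl) (simp add: prod.distrib monoF_def subE_def)
    also have "\<dots> = (\<Sum>p\<in>(\<lambda>\<kappa>. (\<kappa>, subE n e \<kappa>)) ` K. C (fst p) (snd p) * monoF n (fst p) x * monoF n (snd p) y)"
      by (subst sum.reindex) (auto simp: inj_on_def C_def)
    also have "\<dots> = (\<Sum>p\<in>Pairs q n d. C (fst p) (snd p) * monoF n (fst p) x * monoF n (snd p) y)"
    proof (rule sum.mono_neutral_left)
      show "finite (Pairs q n d)" by simp
      show "(\<lambda>\<kappa>. (\<kappa>, subE n e \<kappa>)) ` K \<subseteq> Pairs q n d"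
        using KE sE dgs e(2) by (auto simp: Pairs_def)
      show "\<forall>p\<in>Pairs q n d - (\<lambda>\<kappa>. (\<kappa>, subE n e \<kappa>)) ` K. C (fst p) (snd p) * monoF n (fst p) x * monoF n (snd p) y = 0"
      proof
        fix p assume p: "p \<in> Pairs q n d - (\<lambda>\<kappa>. (\<kappa>, subE n e \<kappa>)) ` K"
        have "\<not> (fst p \<in> K \<and> snd p = subE n e (fst p))"
        proof
          assume h: "fst p \<in> K \<and> snd p = subE n e (fst p)"
          then have "p = (\<lambda>\<kappa>. (\<kappa>, subE n e \<kappa>)) (fst p)" by (cases p) simp
          then have "p \<in> (\<lambda>\<kappa>. (\<kappa>, subE n e \<kappa>)) ` K" using h by (intro image_eqI[where x="fst p"]) auto
          then show False using p by (meson DiffD2)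
        qed
        then have "C (fst p) (snd p) = 0" unfolding C_def by (rule if_not_P)
        then show "C (fst p) (snd p) * monoF n (fst p) x * monoF n (snd p) y = 0" by simp
      qed
    qed
    finally show "monoF n e (lin n a b x y) = (\<Sum>p\<in>Pairs q n d. C (fst p) (snd p) * monoF n (fst p) x * monoF n (snd p) y)" .
  qed
qed

lemma poly2_span:
  fixes a b :: "'a::field"
  assumes "P \<in> fvs.span (mon n ` {e\<in>EE q n. dg n e \<le> d})"
  shows "poly2 q n d (\<lambda>x y. P (lin n a b x y))"
  using assms
proof (induction rule: fvs.span_induct_alt)
  case base
  then show ?case using poly2_zero by (simp add: zero_fun_def)
next
  case (step c m Y)
  then obtain e where e: "m = mon n e" "e \<in> EE q n" "dg n e \<le> d" by auto
  have "poly2 q n d (\<lambda>x y. c * monoF n e (lin n a b x y) + Y (lin n a b x y))"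
    by (intro poly2_comb poly2_monoF e step)
  then show ?case by (simp add: e mon_def)
qed




lemma rows_span:
  fixes f :: "(nat \<Rightarrow> 'a::field) \<Rightarrow> (nat \<Rightarrow> 'a) \<Rightarrow> 'a"
  assumes pf: "poly2 q n d f" and I: "I \<subseteq> Fqn n"
  shows "\<exists>F. finite F \<and> card F \<le> 2 * mm q n (d div 2) \<and>
     (\<forall>x\<in>Fqn n. (\<lambda>y. if y \<in> I then f x y else 0) \<in> fvs.span F)"
proof -
  obtain C where C: "\<forall>x\<in>Fqn n. \<forall>y\<in>Fqn n.
      f x y = (\<Sum>p\<in>Pairs q n d. C (fst p) (snd p) * monoF n (fst p) x * monoF n (snd p) y)"
    using pf unfolding poly2_def by blast
  define h where "h = d div 2"
  define Eh where "Eh = {k\<in>EE q n. dg n k \<le> h}"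
  define G where "G = (\<lambda>k y. if y \<in> I then (\<Sum>j\<in>EE q n. if (k, j) \<in> Pairs q n d then C k j * monoF n j y else 0) else (0::'a))"
  define H where "H = (\<lambda>j y. if y \<in> I then monoF n j y else (0::'a))"
  define F where "F = G ` Eh \<union> H ` Eh"
  have fEh: "finite Eh" by (simp add: Eh_def)
  have cEh: "card Eh = mm q n (d div 2)" by (simp add: Eh_def mm_def h_def)
  have fF: "finite F" using fEh by (simp add: F_def)
  have cF: "card F \<le> 2 * mm q n (d div 2)"
  proof -
    have "card F \<le> card (G ` Eh) + card (H ` Eh)" unfolding F_def by (rule card_Un_le)
    also have "\<dots> \<le> card Eh + card Eh" by (intro add_mono card_image_le fEh)
    finally show ?thesis using cEh by simp
  qed
  have row: "(\<lambda>y. if y \<in> I then f x y else 0) \<in> fvs.span F" if x: "x \<in> Fqn n" for x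
  proof -
    define cf where "cf = (\<lambda>j. \<Sum>k\<in>EE q n. if (k, j) \<in> Pairs q n d \<and> \<not> dg n k \<le> h then C k j * monoF n k x else 0)"
    define R where "R = (\<Sum>k\<in>Eh. (\<lambda>y. monoF n k x * G k y)) + (\<Sum>j\<in>Eh. (\<lambda>y. cf j * H j y))"
    have "R \<in> fvs.span F"
      unfolding R_def
      by (intro fvs.span_add fvs.span_sum fvs.span_scale fvs.span_base) (auto simp: F_def)
    moreover have "(\<lambda>y. if y \<in> I then f x y else 0) = R"
    proof
      fix y
      show "(if y \<in> I then f x y else 0) = R y"
      proof (cases "y \<in> I")
        case False
        then show ?thesis by (simp add: R_def sum_fun_apply G_def H_def)
      next
        case True
        then have y: "y \<in> Fqn n" using I by auto
        define T where "T = (\<lambda>k j. C k j * monoF n k x * monoF n j y)"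
        define A where "A = (\<lambda>k j. if (k, j) \<in> Pairs q n d \<and> dg n k \<le> h then T k j else 0)"
        define B where "B = (\<lambda>k j. if (k, j) \<in> Pairs q n d \<and> \<not> dg n k \<le> h then T k j else 0)"
        have "f x y = (\<Sum>p\<in>Pairs q n d. T (fst p) (snd p))" using C x y by (simp add: T_def)
        also have "\<dots> = (\<Sum>p\<in>EE q n \<times> EE q n. if p \<in> Pairs q n d then T (fst p) (snd p) else 0)"
        proof -
          have "(EE q n \<times> EE q n) \<inter> Pairs q n d = Pairs q n d" using Pairs_sub by blast
          moreover have "finite (EE q n \<times> EE q n)" by simp
          ultimately show ?thesis
            using sum.inter_restrict[where A="EE q n \<times> EE q n" and B="Pairs q n d" and g="\<lambda>p. T (fst p) (snd p)"]
            by simp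
        qed
        also have "\<dots> = (\<Sum>k\<in>EE q n. \<Sum>j\<in>EE q n. if (k, j) \<in> Pairs q n d then T k j else 0)"
          by (simp add: sum.cartesian_product split_beta)
        also have "\<dots> = (\<Sum>k\<in>EE q n. \<Sum>j\<in>EE q n. A k j + B k j)"
          by (intro sum.cong refl) (simp add: A_def B_def)
        also have "\<dots> = (\<Sum>k\<in>EE q n. \<Sum>j\<in>EE q n. A k j) + (\<Sum>k\<in>EE q n. \<Sum>j\<in>EE q n. B k j)"
          by (simp add: sum.distrib)
        also have "(\<Sum>k\<in>EE q n. \<Sum>j\<in>EE q n. A k j) = (\<Sum>k\<in>Eh. monoF n k x * G k y)"
        proof -
          have "(\<Sum>j\<in>EE q n. A k j) = (if dg n k \<le> h then monoF n k x * G k y else 0)" for k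
            using True by (auto simp: A_def G_def T_def sum_distrib_left mult_ac intro!: sum.cong)
          then have "(\<Sum>k\<in>EE q n. \<Sum>j\<in>EE q n. A k j) = (\<Sum>k\<in>EE q n. if dg n k \<le> h then monoF n k x * G k y else 0)"
            by simp
          also have "\<dots> = (\<Sum>k\<in>Eh. monoF n k x * G k y)"
            by (simp add: sum.inter_filter Eh_def)
          finally show ?thesis .
        qed
        also have "(\<Sum>k\<in>EE q n. \<Sum>j\<in>EE q n. B k j) = (\<Sum>j\<in>Eh. cf j * H j y)"
        proof -
          have "(\<Sum>k\<in>EE q n. B k j) = (if dg n j \<le> h then cf j * H j y else 0)" for j
          proof (cases "dg n j \<le> h")
            case True
            have "(\<Sum>k\<in>EE q n. B k j) = (\<Sum>k\<in>EE q n. (if (k, j) \<in> Pairs q n d \<and> \<not> dg n k \<le> h then C k j * monoF n k x else 0) * monoF n j y)"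
              by (intro sum.cong refl) (simp add: B_def T_def)
            also have "\<dots> = cf j * H j y" using \<open>y \<in> I\<close> by (simp add: cf_def H_def sum_distrib_right)
            finally show ?thesis using True by simp
          next
            case False
            have "B k j = 0" for k
            proof -
              have "\<not> ((k, j) \<in> Pairs q n d \<and> \<not> dg n k \<le> h)"
              proof
                assume "(k, j) \<in> Pairs q n d \<and> \<not> dg n k \<le> h"
                then have "dg n k + dg n j \<le> d" "h < dg n k" by (auto simp: Pairs_def)
                moreover have "d \<le> 2 * h + 1" by (simp add: h_def)
                ultimately show False using False by linarith
              qed
              then show ?thesis unfolding B_def by (rule if_not_P)
            qed
            then show ?thesis using False by simp
          qed
          have "(\<Sum>k\<in>EE q n. \<Sum>j\<in>EE q n. B k j) = (\<Sum>j\<in>EE q n. \<Sum>k\<in>EE q n. B k j)"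
            by (rule sum.swap)
          also have "\<dots> = (\<Sum>j\<in>EE q n. if dg n j \<le> h then cf j * H j y else 0)"
            using \<open>\<And>j. (\<Sum>k\<in>EE q n. B k j) = _\<close> by simp
          also have "\<dots> = (\<Sum>j\<in>Eh. cf j * H j y)"
            by (simp add: sum.inter_filter Eh_def)
          finally show ?thesis .
        qed
        also have "(\<Sum>k\<in>Eh. monoF n k x * G k y) + (\<Sum>j\<in>Eh. cf j * H j y) = R y"
          by (simp add: R_def sum_fun_apply)
        finally show ?thesis using True by simp
      qed
    qed
    ultimately show ?thesis by simp
  qed
  show ?thesis using fF cF row by blast
qed




lemma W_vanish:
  assumes "P \<in> fvs.span (mon n ` {e\<in>EE q n. dg n e \<le> d})" "u \<notin> Fqn n"
  shows "P u = (0::'a::field)"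
  using assms(1)
proof (induction rule: fvs.span_induct_alt)
  case base then show ?case by simp
next
  case (step c m Y)
  then show ?case using assms(2) by (auto simp: mon_def)
qed

lemma capset_bound:
  fixes a b c :: "'a::{finite,field}" and I :: "(nat \<Rightarrow> 'a) set"
  defines "q \<equiv> card (UNIV::'a set)"
  assumes abc: "a \<noteq> 0" "b \<noteq> 0" "c \<noteq> 0" "a + b + c = 0"
    and IX: "I \<subseteq> Fqn n"
    and noSol: "\<forall>x\<in>I. \<forall>y\<in>I. \<forall>z\<in>I. (\<forall>i<n. a * x i + b * y i + c * z i = 0) \<longrightarrow> x = y"
  shows "card I + mm q n d \<le> q ^ n + 2 * mm q n (d div 2)"
proof -
  let ?X = "Fqn n :: (nat \<Rightarrow> 'a) set"
  define negc where "negc = (\<lambda>z. lin n (- c) 0 z z)"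
  define S where "S = negc ` I"
  define Md where "Md = (mon n ` {e\<in>EE q n. dg n e \<le> d} :: ((nat \<Rightarrow> 'a) \<Rightarrow> 'a) set)"
  define W where "W = fvs.span Md"
  have finX: "finite ?X" by simp
  have finI: "finite I" using finite_subset[OF IX finX] .
  have SX: "S \<subseteq> ?X" by (auto simp: S_def negc_def)
  have negc_inj: "inj_on negc ?X"
  proof
    fix z z' assume z: "z \<in> ?X" "z' \<in> ?X" "negc z = negc z'"
    have "z i = z' i" for i
    proof (cases "i < n")
      case True
      then have "- c * z i = - c * z' i" using fun_cong[OF z(3), of i] by (simp add: negc_def lin_def)
      then show ?thesis using abc(3) by simp
    next
      case False
      then show ?thesis using z(1,2) by (auto simp: Fqn_def PiE_def extensional_def)
    qed
    then show "z = z'" by auto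
  qed
  have cS: "card S = card I" unfolding S_def
    by (rule card_image) (rule inj_on_subset[OF negc_inj IX])
  have lin_diag: "lin n a b x x = negc x" for x
  proof -
    have "a + b = - c" using abc(4) by (simp add: eq_neg_iff_add_eq_0 add.assoc)
    then show ?thesis by (auto simp: negc_def lin_def fun_eq_iff distrib_right[symmetric])
  qed
  have lin_S: "x = y" if xy: "x \<in> I" "y \<in> I" "lin n a b x y \<in> S" for x y
  proof -
    obtain z where z: "z \<in> I" "lin n a b x y = negc z" using xy(3) by (auto simp: S_def)
    have "\<forall>i<n. a * x i + b * y i + c * z i = 0"
    proof (intro allI impI)
      fix i assume "i < n"
      then have "a * x i + b * y i = - c * z i" using fun_cong[OF z(2), of i] by (simp add: negc_def lin_def)
      then show "a * x i + b * y i + c * z i = 0" by (simp add: eq_neg_iff_add_eq_0)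
    qed
    then show ?thesis using noSol xy(1,2) z(1) by blast
  qed
  have Wv: "\<forall>P\<in>W. \<forall>u. u \<notin> ?X \<longrightarrow> P u = 0" unfolding W_def Md_def using W_vanish by blast
  define Qp where "Qp = (\<lambda>T. \<forall>P\<in>W. (\<forall>u\<in>(?X - S) \<union> T. P u = 0) \<longrightarrow> P = 0)"
  have QS: "T \<subseteq> S \<and> Qp T" if "T = S" for T
  proof -
    have "P = 0" if "P \<in> W" "\<forall>u\<in>(?X - S) \<union> S. P u = 0" for P
    proof
      fix u show "P u = 0 u" using that Wv by (cases "u \<in> ?X") auto
    qed
    then show ?thesis using \<open>T = S\<close> by (auto simp: Qp_def)
  qed
  obtain T where T: "T \<subseteq> S" "Qp T" and Tmin: "\<forall>T'. T' \<subseteq> S \<and> Qp T' \<longrightarrow> card T \<le> card T'"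
    using ex_has_least_nat[where P="\<lambda>T. T \<subseteq> S \<and> Qp T" and m=card, OF QS[OF refl]] by blast
  have finS: "finite S" using finite_subset[OF SX finX] .
  have finT: "finite T" using finite_subset[OF T(1) finS] .
  have cX: "card ?X = q ^ n" by (simp add: card_Fqn q_def)
  have cXS: "card (?X - S) = q ^ n - card I" using card_Diff_subset[OF finS SX] cX cS by simp
  have cIX: "card I \<le> q ^ n" using card_mono[OF finX IX] cX by simp
  have MdW: "Md \<subseteq> W" unfolding W_def by (rule fvs.span_superset)
  have indinj: "fvs.independent (mon n ` EE q n :: ((nat \<Rightarrow> 'a) \<Rightarrow> 'a) set) \<and> inj_on (mon n :: _ \<Rightarrow> (nat \<Rightarrow> 'a) \<Rightarrow> 'a) (EE q n)"
    unfolding q_def by (rule mono_indep_inj)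
  have indMd: "fvs.independent Md"
    using indinj unfolding Md_def by (rule conjE) (erule fvs.independent_mono, auto)
  have cMd: "card Md = mm q n d"
  proof -
    have "inj_on (mon n :: _ \<Rightarrow> (nat \<Rightarrow> 'a) \<Rightarrow> 'a) {e\<in>EE q n. dg n e \<le> d}"
      using indinj by (auto intro: inj_on_subset)
    then show ?thesis unfolding Md_def mm_def by (rule card_image)
  qed
  define Y where "Y = (?X - S) \<union> T"
  have finY: "finite Y" using finX finT by (simp add: Y_def)
  define r where "r = (\<lambda>(P::(nat\<Rightarrow>'a)\<Rightarrow>'a) u. if u \<in> Y then P u else 0)"
  interpret rh: module_hom "\<lambda>c (f::(nat\<Rightarrow>'a)\<Rightarrow>'a) x. c * f x" "\<lambda>c (f::(nat\<Rightarrow>'a)\<Rightarrow>'a) x. c * f x" r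
    by unfold_locales (auto simp: r_def fun_eq_iff algebra_simps)
  have injW: "inj_on r W"
  proof
    fix P P' assume PP: "P \<in> W" "P' \<in> W" "r P = r P'"
    have D: "P - P' \<in> W" using PP(1,2) unfolding W_def by (rule fvs.span_diff)
    have "\<forall>u\<in>(?X - S) \<union> T. (P - P') u = 0"
    proof
      fix u assume "u \<in> (?X - S) \<union> T"
      then have "u \<in> Y" by (simp add: Y_def)
      then show "(P - P') u = 0" using fun_cong[OF PP(3), of u] by (simp add: r_def)
    qed
    then have "P - P' = 0" using T(2) D unfolding Qp_def by blast
    then show "P = P'" by simp
  qed
  have indr: "fvs.independent (r ` Md)"
    by (rule rh.independent_injective_image[OF indMd]) (use injW in \<open>simp add: W_def\<close>)
  have rsp: "r ` Md \<subseteq> fvs.span ((delta ` Y) :: ((nat\<Rightarrow>'a)\<Rightarrow>'a) set)"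
  proof
    fix R assume "R \<in> r ` Md"
    then obtain P where R: "R = r P" by auto
    have "r P = (\<Sum>u\<in>Y. (\<lambda>x. P u * delta u x))"
    proof
      fix x
      show "r P x = (\<Sum>u\<in>Y. (\<lambda>x. P u * delta u x)) x"
      proof (cases "x \<in> Y")
        case True
        have "(\<Sum>u\<in>Y. P u * delta u x) = (\<Sum>u\<in>{x}. P u * delta u x)"
          by (rule sum.mono_neutral_right) (auto simp: True finY delta_def)
        then show ?thesis using True by (simp add: r_def sum_fun_apply delta_def)
      next
        case False
        have "\<forall>u\<in>Y. P u * delta u x = 0" using False by (auto simp: delta_def)
        then show ?thesis using False by (simp add: r_def sum_fun_apply sum.neutral)
      qed
    qed
    also have "\<dots> \<in> fvs.span (delta ` Y)"
      by (intro fvs.span_sum fvs.span_scale fvs.span_base) auto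
    finally show "R \<in> fvs.span (delta ` Y)" using R by simp
  qed
  have "card (r ` Md) \<le> card ((delta ` Y) :: ((nat\<Rightarrow>'a)\<Rightarrow>'a) set)"
    using fvs.independent_span_bound[OF _ indr rsp] finY by simp
  also have "\<dots> \<le> card Y" using finY by (rule card_image_le)
  also have "\<dots> \<le> card (?X - S) + card T" unfolding Y_def by (rule card_Un_le)
  finally have partI: "card (r ` Md) \<le> card (?X - S) + card T" .
  have "card (r ` Md) = card Md"
    by (rule card_image) (rule inj_on_subset[OF injW MdW])
  with partI cMd have partI': "mm q n d \<le> card (?X - S) + card T" by simp
  have partII: "card T \<le> 2 * mm q n (d div 2)"
  proof -
    have ex: "\<exists>P. P \<in> W \<and> (\<forall>u\<in>(?X - S) \<union> (T - {t}). P u = 0) \<and> P t = 1" if t: "t \<in> T" for t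
    proof -
      have "\<not> Qp (T - {t})"
      proof
        assume "Qp (T - {t})"
        moreover have "T - {t} \<subseteq> S" using T(1) by blast
        ultimately have "card T \<le> card (T - {t})" using Tmin by blast
        moreover have "card (T - {t}) < card T" using card_Diff1_less[OF finT t] .
        ultimately show False by simp
      qed
      then obtain P where P: "P \<in> W" "\<forall>u\<in>(?X - S) \<union> (T - {t}). P u = 0" "P \<noteq> 0"
        unfolding Qp_def by blast
      have "P t \<noteq> 0"
      proof
        assume "P t = 0"
        then have "\<forall>u\<in>(?X - S) \<union> T. P u = 0" using P(2) by auto
        then show False using T(2) P(1,3) unfolding Qp_def by blast
      qed
      define P' where "P' = (\<lambda>u. inverse (P t) * P u)"
      have "P' \<in> W" unfolding P'_def W_def using P(1) unfolding W_def by (rule fvs.span_scale)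
      moreover have "\<forall>u\<in>(?X - S) \<union> (T - {t}). P' u = 0" using P(2) by (simp add: P'_def)
      moreover have "P' t = 1" using \<open>P t \<noteq> 0\<close> by (simp add: P'_def)
      ultimately show ?thesis by blast
    qed
    have exs: "\<forall>t\<in>T. \<exists>P. P \<in> W \<and> (\<forall>u\<in>(?X - S) \<union> (T - {t}). P u = 0) \<and> P t = 1"
      using ex by blast
    obtain Pf where Pf: "\<forall>t\<in>T. Pf t \<in> W \<and> (\<forall>u\<in>(?X - S) \<union> (T - {t}). Pf t u = 0) \<and> Pf t t = 1"
      using bchoice[OF exs] by blast
    define Pt where "Pt = (\<Sum>t\<in>T. Pf t)"
    have PtW: "Pt \<in> W" unfolding Pt_def W_def using Pf unfolding W_def by (intro fvs.span_sum) auto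
    have Pt0: "Pt u = 0" if "u \<in> ?X - S" for u
      using Pf that by (simp add: Pt_def sum_fun_apply sum.neutral)
    have Pt1: "Pt t = 1" if t: "t \<in> T" for t
    proof -
      have "Pt t = (\<Sum>t'\<in>T. Pf t' t)" by (simp add: Pt_def sum_fun_apply)
      also have "\<dots> = (\<Sum>t'\<in>{t}. Pf t' t)"
      proof (rule sum.mono_neutral_right)
        show "finite T" by fact
        show "{t} \<subseteq> T" using t by simp
        show "\<forall>i\<in>T - {t}. Pf i t = 0" using Pf t by auto
      qed
      also have "\<dots> = 1" using Pf t by simp
      finally show ?thesis .
    qed
    have "poly2 q n d (\<lambda>x y. Pt (lin n a b x y))"
      using PtW unfolding W_def Md_def by (rule poly2_span)
    from rows_span[OF this IX] obtain F where F: "finite F" "card F \<le> 2 * mm q n (d div 2)"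
      "\<forall>x\<in>?X. (\<lambda>y. if y \<in> I then Pt (lin n a b x y) else 0) \<in> fvs.span F"
      by blast
    define IT where "IT = {x\<in>I. negc x \<in> T}"
    have row: "(\<lambda>y. if y \<in> I then Pt (lin n a b x y) else 0) = delta x" if x: "x \<in> IT" for x
    proof
      fix y
      show "(if y \<in> I then Pt (lin n a b x y) else 0) = delta x y"
      proof (cases "y \<in> I")
        case False
        then show ?thesis using x by (auto simp: delta_def IT_def)
      next
        case True
        show ?thesis
        proof (cases "y = x")
          case True
          then show ?thesis using x Pt1 by (simp add: lin_diag IT_def delta_def)
        next
          case False
          have "lin n a b x y \<notin> S" using lin_S[of x y] x \<open>y \<in> I\<close> False by (auto simp: IT_def)
          then have "Pt (lin n a b x y) = 0" by (intro Pt0) simp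
          then show ?thesis using False \<open>y \<in> I\<close> by (simp add: delta_def)
        qed
      qed
    qed
    have dsp: "(delta ` IT :: ((nat\<Rightarrow>'a)\<Rightarrow>'a) set) \<subseteq> fvs.span F"
    proof
      fix D :: "(nat\<Rightarrow>'a)\<Rightarrow>'a" assume "D \<in> delta ` IT"
      then obtain x where x: "x \<in> IT" "D = delta x" by auto
      have "x \<in> ?X" using x(1) IX by (auto simp: IT_def)
      then have "(\<lambda>y. if y \<in> I then Pt (lin n a b x y) else 0) \<in> fvs.span F" using F(3) by blast
      then show "D \<in> fvs.span F" unfolding row[OF x(1)] x(2) .
    qed
    have "fvs.independent ((delta ` IT) :: ((nat\<Rightarrow>'a)\<Rightarrow>'a) set)" by (rule delta_indep)
    from fvs.independent_span_bound[OF F(1) this dsp]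
    have "card ((delta ` IT) :: ((nat\<Rightarrow>'a)\<Rightarrow>'a) set) \<le> card F" by simp
    moreover have "card ((delta ` IT) :: ((nat\<Rightarrow>'a)\<Rightarrow>'a) set) = card IT"
      by (rule card_image) (rule inj_on_subset[OF delta_inj], simp)
    moreover have "card T = card IT"
    proof -
      have "T = negc ` IT"
      proof
        show "negc ` IT \<subseteq> T" unfolding IT_def by blast
        show "T \<subseteq> negc ` IT"
        proof
          fix t assume t: "t \<in> T"
          then have "t \<in> negc ` I" using T(1) unfolding S_def by blast
          then obtain z where z: "z \<in> I" "t = negc z" by blast
          then have "z \<in> IT" using t unfolding IT_def by blast
          then show "t \<in> negc ` IT" using z(2) by blast
        qed
      qed
      moreover have "inj_on negc IT" by (rule inj_on_subset[OF negc_inj]) (use IX in \<open>auto simp: IT_def\<close>)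
      ultimately show ?thesis by (simp add: card_image)
    qed
    ultimately show ?thesis using F(2) by linarith
  qed
  show ?thesis using partI' partII cXS cIX by linarith
qed




lemma cap_count:
  fixes A :: "(nat \<Rightarrow> 'a::{finite,field}) set" and a b c :: 'a
  assumes AX: "A \<subseteq> Fqn n" and eps: "\<epsilon> > 0"
    and bound: "\<forall>I. I \<subseteq> Fqn n \<longrightarrow> (\<forall>x\<in>I. \<forall>y\<in>I. \<forall>z\<in>I. (\<forall>i<n. a * x i + b * y i + c * z i = 0) \<longrightarrow> x = y)
        \<longrightarrow> real (card I) \<le> B"
  shows "real (card (A - A_eps n A a b c \<epsilon>)) \<le> (2 * real (card A) powr \<epsilon> + 1) * B"
proof -
  define A' where "A' = A - A_eps n A a b c \<epsilon>"
  define R where "R = (\<lambda>x y. \<exists>z\<in>A. \<forall>i<n. a * x i + b * y i + c * z i = 0)"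
  define K where "K = nat \<lfloor>real (card A) powr \<epsilon>\<rfloor>"
  have finA: "finite A" using finite_subset[OF AX finite_Fqn] .
  have finA': "finite A'" using finA by (simp add: A'_def)
  have deg: "\<forall>x\<in>A'. card {y\<in>A'. R x y} \<le> K"
  proof
    fix x assume x: "x \<in> A'"
    define PS where "PS = {(y, z). y \<in> A \<and> z \<in> A \<and> (\<forall>i<n. a * x i + b * y i + c * z i = 0)}"
    have "PS \<subseteq> A \<times> A" by (auto simp: PS_def)
    moreover have "finite (A \<times> A)" using finA by simp
    ultimately have finPS: "finite PS" by (rule finite_subset)
    have "{y\<in>A'. R x y} \<subseteq> fst ` PS" by (force simp: R_def PS_def A'_def)
    then have "card {y\<in>A'. R x y} \<le> card (fst ` PS)" by (intro card_mono) (use finPS in auto)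
    also have "\<dots> \<le> card PS" using finPS by (rule card_image_le)
    also have "card PS = num_solutions n A a b c x" by (simp add: num_solutions_def PS_def)
    finally have le: "card {y\<in>A'. R x y} \<le> num_solutions n A a b c x" .
    have "real (num_solutions n A a b c x) < real (card A) powr \<epsilon>"
      using x by (auto simp: A'_def A_eps_def)
    then have "real (card {y\<in>A'. R x y}) < real (card A) powr \<epsilon>" using le by linarith
    then have "card {y\<in>A'. R x y} \<le> K" unfolding K_def by linarith
    then show "card {y\<in>A'. R x y} \<le> K" .
  qed
  obtain I where I: "I \<subseteq> A'" "\<forall>x\<in>I. \<forall>y\<in>I. R x y \<longrightarrow> x = y" "card A' \<le> (2*K+1) * card I"
    using indep_set_exists[OF finA' deg] by blast
  have IX: "I \<subseteq> Fqn n" using I(1) AX by (auto simp: A'_def)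
  have "\<forall>x\<in>I. \<forall>y\<in>I. \<forall>z\<in>I. (\<forall>i<n. a * x i + b * y i + c * z i = 0) \<longrightarrow> x = y"
  proof (intro ballI impI)
    fix x y z assume xyz: "x \<in> I" "y \<in> I" "z \<in> I" "\<forall>i<n. a * x i + b * y i + c * z i = 0"
    have "z \<in> A" using xyz(3) I(1) by (auto simp: A'_def)
    then have "R x y" using xyz(4) unfolding R_def by blast
    then show "x = y" using I(2) xyz(1,2) by blast
  qed
  then have cI: "real (card I) \<le> B" using bound IX by blast
  have K: "real K \<le> real (card A) powr \<epsilon>" unfolding K_def
    by (simp add: of_nat_nat) 
  have "real (card A') \<le> real (2*K+1) * real (card I)" using I(3) by (metis of_nat_le_iff of_nat_mult)
  also have "\<dots> \<le> (2 * real (card A) powr \<epsilon> + 1) * B"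
    using K cI by (intro mult_mono) auto
  finally show ?thesis by (simp add: A'_def)
qed




lemma mm_mono: "s \<le> s' \<Longrightarrow> mm q n s \<le> mm q n s'"
  unfolding mm_def by (intro card_mono) auto

lemma cap_exp:
  "\<exists>C0 \<Gamma>. C0 > 0 \<and> 0 < \<Gamma> \<and> \<Gamma> < real (card (UNIV::'a::{finite,field} set)) \<and>
    (\<forall>n (a::'a) b c. a \<noteq> 0 \<and> b \<noteq> 0 \<and> c \<noteq> 0 \<and> a + b + c = 0 \<longrightarrow>
      (\<forall>I. I \<subseteq> Fqn n \<longrightarrow> (\<forall>x\<in>I. \<forall>y\<in>I. \<forall>z\<in>I. (\<forall>i<n. a * x i + b * y i + c * z i = 0) \<longrightarrow> x = y)
        \<longrightarrow> real (card I) \<le> C0 * \<Gamma> ^ n))"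
proof -
  let ?q = "card (UNIV::'a set)"
  have q2: "?q \<ge> 2" by (rule card_ge2)
  obtain C \<Gamma> where CG: "C > 0" "0 < \<Gamma>" "\<Gamma> < real ?q"
    "\<forall>n. real (mm ?q n ((?q - 1) * n div 3 + 1)) \<le> C * \<Gamma> ^ n"
    using mm_exp_bound[OF q2] by blast
  have "real (card I) \<le> 3 * C * \<Gamma> ^ n"
    if abc: "a \<noteq> 0" "b \<noteq> 0" "c \<noteq> 0" "a + b + c = 0" and IX: "I \<subseteq> Fqn n"
      and ns: "\<forall>x\<in>I. \<forall>y\<in>I. \<forall>z\<in>I. (\<forall>i<n. a * x i + b * y i + c * z i = 0) \<longrightarrow> x = y"
    for n and a b c :: 'a and I
  proof -
    define t where "t = (?q - 1) * n div 3"
    have "card I + mm ?q n (2 * t) \<le> ?q ^ n + 2 * mm ?q n (2 * t div 2)"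
      by (rule capset_bound[OF abc IX ns])
    then have 1: "card I + mm ?q n (2 * t) \<le> ?q ^ n + 2 * mm ?q n t" by simp
    have 2: "?q ^ n \<le> mm ?q n (2 * t) + mm ?q n (t + 1)"
      unfolding t_def using high_bound[of ?q n] q2 by simp
    have 3: "mm ?q n t \<le> mm ?q n (t + 1)" by (rule mm_mono) simp
    have "card I \<le> 3 * mm ?q n (t + 1)" using 1 2 3 by linarith
    then have "real (card I) \<le> 3 * real (mm ?q n (t + 1))" by simp
    also have "\<dots> \<le> 3 * (C * \<Gamma> ^ n)" using CG(4) by (simp add: t_def)
    finally show ?thesis by simp
  qed
  then show ?thesis using CG by (intro exI[of _ "3 * C"] exI[of _ \<Gamma>]) auto
qed

theorem theorem1:
  shows "\<exists>\<epsilon>::real. \<epsilon> > 0 \<and> (\<exists>cq::real. 0 < cq \<and> cq < real (card (UNIV :: 'a::{finite,field} set)) \<and>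
    (\<forall>\<delta>::real. \<delta> > 0 \<longrightarrow>
      (\<exists>N. \<forall>n\<ge>N. \<forall>A::(nat \<Rightarrow> 'a) set. A \<subseteq> Fqn n \<longrightarrow> real (card A) > cq ^ n \<longrightarrow>
         (\<forall>a b c::'a. a \<noteq> 0 \<and> b \<noteq> 0 \<and> c \<noteq> 0 \<and> a + b + c = 0 \<longrightarrow>
            real (card (A_eps n A a b c \<epsilon>)) \<ge> (1 - \<delta>) * real (card A)))))"
proof -
  let ?q = "real (card (UNIV::'a set))"
  have q2: "?q \<ge> 2" using card_ge2[where 'a='a] by simp
  obtain C0 \<Gamma> where CG: "C0 > 0" "0 < \<Gamma>" "\<Gamma> < ?q"
    and capb: "\<forall>n (a::'a) b c. a \<noteq> 0 \<and> b \<noteq> 0 \<and> c \<noteq> 0 \<and> a + b + c = 0 \<longrightarrow>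
      (\<forall>I. I \<subseteq> Fqn n \<longrightarrow> (\<forall>x\<in>I. \<forall>y\<in>I. \<forall>z\<in>I. (\<forall>i<n. a * x i + b * y i + c * z i = 0) \<longrightarrow> x = y)
        \<longrightarrow> real (card I) \<le> C0 * \<Gamma> ^ n)"
    using cap_exp[where 'a='a] by blast
  define G0 where "G0 = max \<Gamma> 1"
  have G0: "1 \<le> G0" "G0 < ?q" "\<Gamma> \<le> G0" using CG q2 by (auto simp: G0_def)
  define cq where "cq = (G0 + ?q) / 2"
  have cq: "G0 < cq" "cq < ?q" "1 < cq" using G0 by (auto simp: cq_def)
  define \<epsilon> where "\<epsilon> = (ln cq - ln G0) / (2 * ln cq)"
  have lncq: "ln cq > 0" using cq by simp
  have lnG: "ln G0 \<ge> 0" "ln G0 < ln cq" using G0 cq by auto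
  have eps: "\<epsilon> > 0" "\<epsilon> < 1" using lncq lnG by (auto simp: \<epsilon>_def field_simps)
  define \<rho> where "\<rho> = cq powr (1 - \<epsilon>)"
  have "(1 - \<epsilon>) * ln cq = (ln cq + ln G0) / 2" using lncq by (simp add: \<epsilon>_def field_simps)
  then have "(1 - \<epsilon>) * ln cq > ln G0" using lnG by simp
  then have "exp ((1 - \<epsilon>) * ln cq) > exp (ln G0)" by simp
  then have \<rho>: "\<rho> > G0" using cq G0 by (simp add: \<rho>_def powr_def)
  have main: "\<exists>N. \<forall>n\<ge>N. \<forall>A::(nat \<Rightarrow> 'a) set. A \<subseteq> Fqn n \<longrightarrow> real (card A) > cq ^ n \<longrightarrow>
         (\<forall>a b c::'a. a \<noteq> 0 \<and> b \<noteq> 0 \<and> c \<noteq> 0 \<and> a + b + c = 0 \<longrightarrow>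
            real (card (A_eps n A a b c \<epsilon>)) \<ge> (1 - \<delta>) * real (card A))" if \<delta>: "\<delta> > 0" for \<delta>
  proof -
    define r where "r = \<rho> / G0"
    have r1: "r > 1" using \<rho> G0 by (simp add: r_def)
    obtain N where N: "3 * C0 / \<delta> < r ^ N" using real_arch_pow[OF r1] by blast
    have "real (card (A_eps n A a b c \<epsilon>)) \<ge> (1 - \<delta>) * real (card A)"
      if n: "n \<ge> N" and AX: "A \<subseteq> Fqn n" and Acard: "real (card A) > cq ^ n"
        and abc: "a \<noteq> 0 \<and> b \<noteq> 0 \<and> c \<noteq> 0 \<and> a + b + c = 0"
      for n A and a b c :: 'a
    proof (rule ccontr)
      assume neg: "\<not> ?thesis"
      let ?A = "real (card A)"
      have finA: "finite A" using finite_subset[OF AX finite_Fqn] .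
      have A1: "?A \<ge> 1" using Acard cq by (smt (verit) one_le_power)
      have sub: "A_eps n A a b c \<epsilon> \<subseteq> A" by (auto simp: A_eps_def)
      have "real (card (A - A_eps n A a b c \<epsilon>)) = ?A - real (card (A_eps n A a b c \<epsilon>))"
        using card_Diff_subset[OF finite_subset[OF sub finA] sub] card_mono[OF finA sub] by simp
      then have gt: "real (card (A - A_eps n A a b c \<epsilon>)) > \<delta> * ?A" using neg by (simp add: algebra_simps)
      have bnd: "real (card (A - A_eps n A a b c \<epsilon>)) \<le> (2 * ?A powr \<epsilon> + 1) * (C0 * \<Gamma> ^ n)"
        using cap_count[OF AX eps(1), of a b c "C0 * \<Gamma> ^ n"] capb abc by blast
      have Ae: "?A powr \<epsilon> \<ge> 1" using A1 eps by (simp add: ge_one_powr_ge_zero)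
      have Gn: "\<Gamma> ^ n \<le> G0 ^ n" using CG G0 by (intro power_mono) auto
      have "(2 * ?A powr \<epsilon> + 1) * (C0 * \<Gamma> ^ n) \<le> (3 * ?A powr \<epsilon>) * (C0 * G0 ^ n)"
        using Ae Gn CG by (intro mult_mono) auto
      with gt bnd have "\<delta> * ?A < 3 * ?A powr \<epsilon> * (C0 * G0 ^ n)" by linarith
      moreover have "?A = ?A powr \<epsilon> * ?A powr (1 - \<epsilon>)"
        using A1 by (simp add: powr_add[symmetric])
      ultimately have "?A powr \<epsilon> * (\<delta> * ?A powr (1 - \<epsilon>)) < ?A powr \<epsilon> * (3 * C0 * G0 ^ n)"
        by (simp add: algebra_simps)
      then have lt: "\<delta> * ?A powr (1 - \<epsilon>) < 3 * C0 * G0 ^ n" by (rule mult_left_less_imp_less) (use Ae in simp)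
      have "(cq ^ n) powr (1 - \<epsilon>) = \<rho> ^ n"
        using cq by (simp add: \<rho>_def powr_def ln_realpow exp_of_nat_mult[symmetric] algebra_simps)
      moreover have "(cq ^ n) powr (1 - \<epsilon>) \<le> ?A powr (1 - \<epsilon>)"
        using Acard eps cq by (intro powr_mono2) auto
      ultimately have "\<delta> * \<rho> ^ n < 3 * C0 * G0 ^ n" using lt \<delta>
        by (smt (verit) mult_left_mono)
      then have "\<delta> * (r ^ n * G0 ^ n) < 3 * C0 * G0 ^ n" using G0 by (simp add: r_def power_divide)
      then have "\<delta> * r ^ n < 3 * C0" using G0 by (simp add: mult.assoc[symmetric])
      moreover have "r ^ N \<le> r ^ n" using r1 n by (intro power_increasing) auto
      moreover have "3 * C0 < \<delta> * r ^ N" using N \<delta> by (simp add: field_simps)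
      ultimately show False using \<delta> by (smt (verit) mult_left_mono)
    qed
    then show ?thesis by blast
  qed
  show ?thesis
    by (intro exI[of _ \<epsilon>] conjI eps(1) exI[of _ cq]) (use cq G0 main in auto)
qed


end
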